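(* Let $\mathcal{S}$ be a sound and refutationally complete saturation system. Then for all natural numbers $0<n<m$, the system $\mathcal{S}+\mathrm{Literal}\text{-}\mathrm{AIND}^R_2$ refutes neither the clause set $\mathcal{X}_m$ nor the clause set $\mathcal{Y}_{m,n}$.
   Context: Language of linear arithmetic $\{0/0,s/1,p/1,+/2\}$. $\mathcal{T}'$ has axioms (universally closed) $0\neq s(x)$, $p(0)=0$, $p(s(x))=x$, $x+0=x$, $x+s(y)=s(x+y)$, $x\neq0\to x=s(p(x))$, $x+y=y+x$, $(x+y)+z=x+(y+z)$, $x+y=x+z\to y=z$. $m\cdot t$ is $t+(t+\cdots+(t+t)\cdots)$ ($m$ copies), $s^n$ is $n$-fold $s$. $C_m=\forall x,y(m\cdot x=m\cdot y\to x=y)$, $D_{m,n}=\forall x,y\,(s^n(m\cdot x)\neq m\cdot y)$; $\mathcal{X}_m=\mathit{CNF}(\mathit{sk}^\exists(\mathcal{T}'+\neg C_m))$, $\mathcal{Y}_{m,n}=\mathit{CNF}(\mathit{sk}^\exists(\mathcal{T}'+\neg D_{m,n}))$. Skolemization $\mathit{sk}^\exists$/$\mathit{sk}^\forall$ uses canonical Skolem symbols: a strong quantifier $QxA$ with free variables $\vec y$ is replaced by $\mathfrak{s}_{QxA}(\vec y)$, a new function symbol indexed by $QxA$ ($\mathit{sk}^Q$ fixes atoms, commutes with $\wedge,\vee$, $\mathit{sk}^Q(\neg A)=\neg\mathit{sk}^{\overline Q}(A)$, eliminates quantifiers $Q$ and keeps quantifiers $\overline Q$). $\mathit{CNF}$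 gives clause sets of conjunctive normal forms; $\mathcal{E}\vee C=\{E\cup C:E\in\mathcal{E}\}$. Saturation systems: sets of rules $\mathcal{C}/\mathcal{D}$ ($\mathcal{C}$ clause set, $\mathcal{D}$ finite clause set), $+$ = union; a deduction from $\mathcal{C}_0$ is $\mathcal{D}_0=\mathcal{C}_0,\dots,\mathcal{D}_k$ with $\mathcal{D}_{i+1}=\mathcal{D}_i\cup\mathcal{B}_i$ for a rule $\mathcal{D}_i/\mathcal{B}_i$; a refutation has the empty clause in $\mathcal{D}_k$. Sound: any clause $C$ derivable from $\mathcal{C}_0$ has $L(C)\subseteq L(\mathcal{C}_0)$ and $\mathcal{C}_0\models C$; refutationally complete: every inconsistent clause set has a refutation. $\mathrm{Literal}\text{-}\mathrm{AIND}^R_2$: from a clause set containing a clause $\overline{l}(a,a)\vee C$, where $l(x,y)$ is a literal, $a$ is a constant, $l(a,a)$ is ground and $\overline{l}$ denotes the complementary literal, derive $\mathit{CNF}(\neg\,\mathit{sk}^\forall(l(0,a)\wedge\forall x(l(x,a)\to l(s(x),a))))\vee C$, i.e. the clauses $\{\neg l(0,a),l(\sigma,a)\}\cup C$ and $\{\neg l(0,a),\neg l(s(\sigma),a)\}\cup C$ with $\sigma=\mathfrak{s}_{\forall x(l(x,a)\to l(s(x),a))}$. *)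

theory Defs
  imports Main
begin

section \<open>First-order syntax with canonical Skolem symbols\<close>

text \<open>Function symbols are the symbols of linear
arithmetic (0, s, p, +), arbitrary further user symbols, and canonical Skolem
symbols indexed by the quantified formula they replace.\<close>

datatype trm = Var nat | Fn fsym "trm list"
and fsym = FZero | FS | FP | FPlus | FUser nat | FSk form
and form = FEq trm trm | FPred nat "trm list" | FNeg form | FConj form form
  | FDisj form form | FImp form form | FAll nat form | FEx nat form

datatype atm = AEq trm trm | APred nat "trm list"
datatype lit = Pos atm | NegL atm

type_synonym clause = "lit set"
type_synonym clauses = "clause set"

abbreviation zero :: trm where "zero \<equiv> Fn FZero []"
abbreviation sc :: "trm \<Rightarrow> trm" where "sc t \<equiv> Fn FS [t]"
abbreviation pr :: "trm \<Rightarrow> trm" where "pr t \<equiv> Fn FP [t]"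
abbreviation pl :: "trm \<Rightarrow> trm \<Rightarrow> trm" where "pl t u \<equiv> Fn FPlus [t, u]"

fun fv_trm :: "trm \<Rightarrow> nat set" where
  "fv_trm (Var x) = {x}"
| "fv_trm (Fn f ts) = \<Union>(set (map fv_trm ts))"

fun fv_form :: "form \<Rightarrow> nat set" where
  "fv_form (FEq t u) = fv_trm t \<union> fv_trm u"
| "fv_form (FPred p ts) = \<Union>(set (map fv_trm ts))"
| "fv_form (FNeg A) = fv_form A"
| "fv_form (FConj A B) = fv_form A \<union> fv_form B"
| "fv_form (FDisj A B) = fv_form A \<union> fv_form B"
| "fv_form (FImp A B) = fv_form A \<union> fv_form B"
| "fv_form (FAll x A) = fv_form A - {x}"
| "fv_form (FEx x A) = fv_form A - {x}"

fun tsubst :: "(nat \<Rightarrow> trm) \<Rightarrow> trm \<Rightarrow> trm" where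
  "tsubst e (Var x) = e x"
| "tsubst e (Fn f ts) = Fn f (map (tsubst e) ts)"

text \<open>Substitution in formulas (bound variables are protected; no renaming is
performed, which is irrelevant for the closed formulas considered below).\<close>
fun fsubst :: "(nat \<Rightarrow> trm) \<Rightarrow> form \<Rightarrow> form" where
  "fsubst e (FEq t u) = FEq (tsubst e t) (tsubst e u)"
| "fsubst e (FPred p ts) = FPred p (map (tsubst e) ts)"
| "fsubst e (FNeg A) = FNeg (fsubst e A)"
| "fsubst e (FConj A B) = FConj (fsubst e A) (fsubst e B)"
| "fsubst e (FDisj A B) = FDisj (fsubst e A) (fsubst e B)"
| "fsubst e (FImp A B) = FImp (fsubst e A) (fsubst e B)"
| "fsubst e (FAll x A) = FAll x (fsubst (e(x := Var x)) A)"
| "fsubst e (FEx x A) = FEx x (fsubst (e(x := Var x)) A)"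

definition skterm :: "form \<Rightarrow> trm" where
  "skterm \<Phi> = Fn (FSk \<Phi>) (map Var (sorted_list_of_set (fv_form \<Phi>)))"

text \<open>\<open>sk q e A\<close>: with \<open>q = True\<close> this is \<open>sk\<^sup>\<exists>\<close> (eliminates \<open>\<exists>\<close>, keeps \<open>\<forall>\<close>),
with \<open>q = False\<close> it is \<open>sk\<^sup>\<forall>\<close>; the environment \<open>e\<close> records the substitutions of
Skolem terms for the already eliminated outer quantifiers, so that
\<open>sk q Var (\<exists>x A) = sk q Var (A[x := \<s>_{\<exists>xA}(y\<^sub>1..y\<^sub>k)])\<close>.\<close>
fun sk :: "bool \<Rightarrow> (nat \<Rightarrow> trm) \<Rightarrow> form \<Rightarrow> form" where
  "sk q e (FEq t u) = FEq (tsubst e t) (tsubst e u)"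
| "sk q e (FPred p ts) = FPred p (map (tsubst e) ts)"
| "sk q e (FNeg A) = FNeg (sk (\<not> q) e A)"
| "sk q e (FConj A B) = FConj (sk q e A) (sk q e B)"
| "sk q e (FDisj A B) = FDisj (sk q e A) (sk q e B)"
| "sk q e (FImp A B) = FImp (sk (\<not> q) e A) (sk q e B)"
| "sk q e (FAll x A) =
     (if q then FAll x (sk q (e(x := Var x)) A)
      else sk q (e(x := skterm (fsubst e (FAll x A)))) A)"
| "sk q e (FEx x A) =
     (if q then sk q (e(x := skterm (fsubst e (FEx x A)))) A
      else FEx x (sk q (e(x := Var x)) A))"

definition sk_ex :: "form \<Rightarrow> form" where "sk_ex A = sk True Var A"
definition sk_all :: "form \<Rightarrow> form" where "sk_all A = sk False Var A"

definition cdisj :: "clauses \<Rightarrow> clauses \<Rightarrow> clauses" where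
  "cdisj X Y = {C \<union> D | C D. C \<in> X \<and> D \<in> Y}"

text \<open>\<open>cnf True A\<close> is the clause set of a conjunctive normal form of \<open>A\<close>
(\<open>cnf False A\<close> that of \<open>\<not>A\<close>). Quantifiers are dropped: after \<open>sk\<^sup>\<exists>\<close> all
remaining quantifiers are (effectively) universal and free variables of clauses
are implicitly universally quantified.\<close>
fun cnf :: "bool \<Rightarrow> form \<Rightarrow> clauses" where
  "cnf p (FEq t u) = {{if p then Pos (AEq t u) else NegL (AEq t u)}}"
| "cnf p (FPred r ts) = {{if p then Pos (APred r ts) else NegL (APred r ts)}}"
| "cnf p (FNeg A) = cnf (\<not> p) A"
| "cnf p (FConj A B) = (if p then cnf p A \<union> cnf p B else cdisj (cnf p A) (cnf p B))"
| "cnf p (FDisj A B) = (if p then cdisj (cnf p A) (cnf p B) else cnf p A \<union> cnf p B)"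
| "cnf p (FImp A B) = (if p then cdisj (cnf (\<not> p) A) (cnf p B) else cnf (\<not> p) A \<union> cnf p B)"
| "cnf p (FAll x A) = cnf p A"
| "cnf p (FEx x A) = cnf p A"

definition CNF :: "form set \<Rightarrow> clauses" where
  "CNF \<T> = (\<Union>A\<in>\<T>. cnf True A)"

subsection \<open>The theory T' and the clause sets X_m, Y_{m,n}\<close>

definition vx :: nat where "vx = 0"
definition vy :: nat where "vy = 1"
definition vz :: nat where "vz = 2"

abbreviation fneq :: "trm \<Rightarrow> trm \<Rightarrow> form" where "fneq t u \<equiv> FNeg (FEq t u)"

definition Tprime :: "form set" where
  "Tprime = {
     FAll vx (fneq zero (sc (Var vx))),
     FEq (pr zero) zero,
     FAll vx (FEq (pr (sc (Var vx))) (Var vx)),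
     FAll vx (FEq (pl (Var vx) zero) (Var vx)),
     FAll vx (FAll vy (FEq (pl (Var vx) (sc (Var vy))) (sc (pl (Var vx) (Var vy))))),
     FAll vx (FImp (fneq (Var vx) zero) (FEq (Var vx) (sc (pr (Var vx))))),
     FAll vx (FAll vy (FEq (pl (Var vx) (Var vy)) (pl (Var vy) (Var vx)))),
     FAll vx (FAll vy (FAll vz (FEq (pl (pl (Var vx) (Var vy)) (Var vz))
                                     (pl (Var vx) (pl (Var vy) (Var vz)))))),
     FAll vx (FAll vy (FAll vz (FImp (FEq (pl (Var vx) (Var vy)) (pl (Var vx) (Var vz)))
                                     (FEq (Var vy) (Var vz)))))}"

text \<open>\<open>m \<cdot> t = t + (t + ... + (t + t)...)\<close> with \<open>m\<close> copies of \<open>t\<close> (for \<open>m \<ge> 1\<close>;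
the value for \<open>m = 0\<close> is an irrelevant convention).\<close>
fun mtimes :: "nat \<Rightarrow> trm \<Rightarrow> trm" where
  "mtimes 0 t = zero"
| "mtimes (Suc 0) t = t"
| "mtimes (Suc (Suc k)) t = pl t (mtimes (Suc k) t)"

definition spow :: "nat \<Rightarrow> trm \<Rightarrow> trm" where
  "spow n = (\<lambda>u. sc u) ^^ n"

definition Cm :: "nat \<Rightarrow> form" where
  "Cm m = FAll vx (FAll vy (FImp (FEq (mtimes m (Var vx)) (mtimes m (Var vy)))
                                 (FEq (Var vx) (Var vy))))"

definition Dmn :: "nat \<Rightarrow> nat \<Rightarrow> form" where
  "Dmn m n = FAll vx (FAll vy (fneq (spow n (mtimes m (Var vx))) (mtimes m (Var vy))))"

definition Xcl :: "nat \<Rightarrow> clauses" where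
  "Xcl m = CNF (sk_ex ` (Tprime \<union> {FNeg (Cm m)}))"

definition Ycl :: "nat \<Rightarrow> nat \<Rightarrow> clauses" where
  "Ycl m n = CNF (sk_ex ` (Tprime \<union> {FNeg (Dmn m n)}))"

section \<open>Semantics\<close>

text \<open>Structures have a nonempty domain \<open>D\<close> that is a subset of \<open>nat\<close>; since the
language is countable, by Loewenheim-Skolem this yields the usual notions of
satisfiability and entailment.\<close>

fun eval :: "(fsym \<Rightarrow> nat list \<Rightarrow> nat) \<Rightarrow> (nat \<Rightarrow> nat) \<Rightarrow> trm \<Rightarrow> nat" where
  "eval F v (Var x) = v x"
| "eval F v (Fn f ts) = F f (map (eval F v) ts)"

fun atm_true :: "(fsym \<Rightarrow> nat list \<Rightarrow> nat) \<Rightarrow> (nat \<Rightarrow> nat list \<Rightarrow> bool) \<Rightarrow> (nat \<Rightarrow> nat) \<Rightarrow> atm \<Rightarrow> bool" where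
  "atm_true F P v (AEq t u) = (eval F v t = eval F v u)"
| "atm_true F P v (APred p ts) = P p (map (eval F v) ts)"

fun lit_true :: "(fsym \<Rightarrow> nat list \<Rightarrow> nat) \<Rightarrow> (nat \<Rightarrow> nat list \<Rightarrow> bool) \<Rightarrow> (nat \<Rightarrow> nat) \<Rightarrow> lit \<Rightarrow> bool" where
  "lit_true F P v (Pos a) = atm_true F P v a"
| "lit_true F P v (NegL a) = (\<not> atm_true F P v a)"

definition is_struct :: "nat set \<Rightarrow> (fsym \<Rightarrow> nat list \<Rightarrow> nat) \<Rightarrow> bool" where
  "is_struct D F \<longleftrightarrow> D \<noteq> {} \<and> (\<forall>f xs. set xs \<subseteq> D \<longrightarrow> F f xs \<in> D)"

definition clause_true :: "nat set \<Rightarrow> (fsym \<Rightarrow> nat list \<Rightarrow> nat) \<Rightarrow> (nat \<Rightarrow> nat list \<Rightarrow> bool) \<Rightarrow> clause \<Rightarrow> bool" where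
  "clause_true D F P C \<longleftrightarrow> (\<forall>v. range v \<subseteq> D \<longrightarrow> (\<exists>l\<in>C. lit_true F P v l))"

definition is_model :: "nat set \<Rightarrow> (fsym \<Rightarrow> nat list \<Rightarrow> nat) \<Rightarrow> (nat \<Rightarrow> nat list \<Rightarrow> bool) \<Rightarrow> clauses \<Rightarrow> bool" where
  "is_model D F P \<C> \<longleftrightarrow> is_struct D F \<and> (\<forall>C\<in>\<C>. clause_true D F P C)"

definition satisfiable :: "clauses \<Rightarrow> bool" where
  "satisfiable \<C> \<longleftrightarrow> (\<exists>D F P. is_model D F P \<C>)"

definition entails :: "clauses \<Rightarrow> clause \<Rightarrow> bool" where
  "entails \<C> C \<longleftrightarrow> (\<forall>D F P. is_model D F P \<C> \<longrightarrow> clause_true D F P C)"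

fun syms_trm :: "trm \<Rightarrow> ((fsym \<times> nat) + (nat \<times> nat)) set" where
  "syms_trm (Var x) = {}"
| "syms_trm (Fn f ts) = insert (Inl (f, length ts)) (\<Union>(set (map syms_trm ts)))"

fun syms_atm :: "atm \<Rightarrow> ((fsym \<times> nat) + (nat \<times> nat)) set" where
  "syms_atm (AEq t u) = syms_trm t \<union> syms_trm u"
| "syms_atm (APred p ts) = insert (Inr (p, length ts)) (\<Union>(set (map syms_trm ts)))"

fun syms_lit :: "lit \<Rightarrow> ((fsym \<times> nat) + (nat \<times> nat)) set" where
  "syms_lit (Pos a) = syms_atm a"
| "syms_lit (NegL a) = syms_atm a"

definition lang_clause :: "clause \<Rightarrow> ((fsym \<times> nat) + (nat \<times> nat)) set" where
  "lang_clause C = (\<Union>l\<in>C. syms_lit l)"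

definition lang :: "clauses \<Rightarrow> ((fsym \<times> nat) + (nat \<times> nat)) set" where
  "lang \<C> = (\<Union>C\<in>\<C>. lang_clause C)"

section \<open>Saturation systems\<close>

definition clause_set :: "clauses \<Rightarrow> bool" where
  "clause_set \<C> \<longleftrightarrow> (\<forall>C\<in>\<C>. finite C)"

type_synonym sat_system = "(clauses \<times> clauses) set"

definition is_sat_system :: "sat_system \<Rightarrow> bool" where
  "is_sat_system S \<longleftrightarrow>
     (\<forall>(\<C>, \<D>)\<in>S. clause_set \<C> \<and> finite \<D> \<and> clause_set \<D>)"

inductive deducible :: "sat_system \<Rightarrow> clauses \<Rightarrow> clauses \<Rightarrow> bool" for S C0 where
  start: "deducible S C0 C0"
| step: "deducible S C0 \<D> \<Longrightarrow> (\<D>, \<B>) \<in> S \<Longrightarrow> deducible S C0 (\<D> \<union> \<B>)"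

definition derivable :: "sat_system \<Rightarrow> clauses \<Rightarrow> clause \<Rightarrow> bool" where
  "derivable S C0 C \<longleftrightarrow> (\<exists>\<D>. deducible S C0 \<D> \<and> C \<in> \<D>)"

definition refutes :: "sat_system \<Rightarrow> clauses \<Rightarrow> bool" where
  "refutes S C0 \<longleftrightarrow> derivable S C0 {}"

definition sound :: "sat_system \<Rightarrow> bool" where
  "sound S \<longleftrightarrow> (\<forall>C0 C. clause_set C0 \<longrightarrow> derivable S C0 C \<longrightarrow>
                     lang_clause C \<subseteq> lang C0 \<and> entails C0 C)"

definition refut_complete :: "sat_system \<Rightarrow> bool" where
  "refut_complete S \<longleftrightarrow> (\<forall>C0. clause_set C0 \<longrightarrow> \<not> satisfiable C0 \<longrightarrow> refutes S C0)"

section \<open>The rule Literal-AIND^R_2\<close>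

fun asubst :: "(nat \<Rightarrow> trm) \<Rightarrow> atm \<Rightarrow> atm" where
  "asubst e (AEq t u) = AEq (tsubst e t) (tsubst e u)"
| "asubst e (APred p ts) = APred p (map (tsubst e) ts)"

fun lsubst :: "(nat \<Rightarrow> trm) \<Rightarrow> lit \<Rightarrow> lit" where
  "lsubst e (Pos a) = Pos (asubst e a)"
| "lsubst e (NegL a) = NegL (asubst e a)"

fun compl :: "lit \<Rightarrow> lit" where
  "compl (Pos a) = NegL a"
| "compl (NegL a) = Pos a"

fun atm_form :: "atm \<Rightarrow> form" where
  "atm_form (AEq t u) = FEq t u"
| "atm_form (APred p ts) = FPred p ts"

fun lit_form :: "lit \<Rightarrow> form" where
  "lit_form (Pos a) = atm_form a"
| "lit_form (NegL a) = FNeg (atm_form a)"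

definition vars_lit :: "lit \<Rightarrow> nat set" where
  "vars_lit l = fv_form (lit_form l)"

definition linst :: "lit \<Rightarrow> nat \<Rightarrow> nat \<Rightarrow> trm \<Rightarrow> trm \<Rightarrow> lit" where
  "linst l x y t u = lsubst (Var(x := t, y := u)) l"

definition aind_sigma :: "lit \<Rightarrow> nat \<Rightarrow> nat \<Rightarrow> trm \<Rightarrow> trm" where
  "aind_sigma l x y a =
     skterm (FAll x (FImp (lit_form (linst l x y (Var x) a))
                          (lit_form (linst l x y (sc (Var x)) a))))"

definition Literal_AIND :: sat_system where
  "Literal_AIND = {(\<C>, \<B>) | \<C> \<B> l x y c C.
      clause_set \<C> \<and> x \<noteq> y \<and> vars_lit l \<subseteq> {x, y} \<and> finite C \<and>
      insert (compl (linst l x y (Fn c []) (Fn c []))) C \<in> \<C> \<and>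
      \<B> = {insert (compl (linst l x y zero (Fn c [])))
              (insert (linst l x y (aind_sigma l x y (Fn c [])) (Fn c [])) C),
           insert (compl (linst l x y zero (Fn c [])))
              (insert (compl (linst l x y (sc (aind_sigma l x y (Fn c []))) (Fn c []))) C)}}"

end

theory Submission
  imports Defs "HOL-Library.Countable"
begin

type_synonym G = "int \<times> int \<times> int"

definition D0 :: "nat \<Rightarrow> G set" where
 "D0 m = {(a,z,r). (a = 0 \<and> 0 \<le> z \<and> int m dvd z \<and> r = 0) \<or> (1 \<le> a \<and> 0 \<le> r \<and> r < int m)}"
definition zeroG :: G where "zeroG = (0,0,0)"
fun sucG :: "nat \<Rightarrow> G \<Rightarrow> G" where "sucG m (a,z,r) = (a, z + int m, r)"
fun predG :: "nat \<Rightarrow> G \<Rightarrow> G" where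
  "predG m (a,z,r) = (if (a,z,r) = zeroG then zeroG else (a, z - int m, r))"
fun plusG :: "nat \<Rightarrow> G \<Rightarrow> G \<Rightarrow> G" where
  "plusG m (a,z,r) (a',z',r') = (a+a', z+z', (r+r') mod int m)"
declare sucG.simps[simp del] predG.simps[simp del] plusG.simps[simp del]
lemma predG_zero[simp]: "predG m zeroG = zeroG" by (simp add: zeroG_def predG.simps)

fun bv :: "form \<Rightarrow> nat" where "bv (FAll x A) = x" | "bv _ = 0"
definition bvv :: "form \<Rightarrow> G \<Rightarrow> nat \<Rightarrow> G" where "bvv \<phi> e = (\<lambda>_. zeroG)(bv \<phi> := e)"

primrec ev :: "nat \<Rightarrow> trm \<Rightarrow> (nat \<Rightarrow> G) \<Rightarrow> G"
 and iF :: "nat \<Rightarrow> fsym \<Rightarrow> G list \<Rightarrow> G"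
 and tr :: "nat \<Rightarrow> form \<Rightarrow> bool \<Rightarrow> (nat \<Rightarrow> G) \<Rightarrow> bool" where
 "ev m (Var x) v = v x"
| "ev m (Fn f ts) v = iF m f (map (\<lambda>t. ev m t v) ts)"
| "iF m FZero xs = zeroG"
| "iF m FS xs = (case xs of [u] \<Rightarrow> sucG m u | _ \<Rightarrow> zeroG)"
| "iF m FP xs = (case xs of [u] \<Rightarrow> predG m u | _ \<Rightarrow> zeroG)"
| "iF m FPlus xs = (case xs of [u, w] \<Rightarrow> plusG m u w | _ \<Rightarrow> zeroG)"
| "iF m (FUser k) xs = zeroG"
| "iF m (FSk \<phi>) xs = (if \<exists>e\<in>D0 m. tr m \<phi> True (bvv \<phi> e)
     then SOME e. e \<in> D0 m \<and> tr m \<phi> True (bvv \<phi> e) else zeroG)"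
| "tr m (FEq t u) b v = (ev m t v = ev m u v)"
| "tr m (FPred p ts) b v = False"
| "tr m (FNeg A) b v = (\<not> tr m A False v)"
| "tr m (FConj A B) b v = (tr m A False v \<and> tr m B False v)"
| "tr m (FDisj A B) b v = (tr m A False v \<or> tr m B False v)"
| "tr m (FImp A B) b v = (tr m A False v \<longrightarrow> tr m B False v)"
| "tr m (FAll x A) b v = (if b then \<not> tr m A False v else (\<forall>d\<in>D0 m. tr m A False (v(x:=d))))"
| "tr m (FEx x A) b v = (\<exists>d\<in>D0 m. tr m A False (v(x:=d)))"

lemma trm_ind[case_names Var Fn]:
  assumes "\<And>x. P (Var x)" and "\<And>f ts. (\<And>t. t \<in> set ts \<Longrightarrow> P t) \<Longrightarrow> P (Fn f ts)"
  shows "P t"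
  by (rule trm.induct[of P "\<lambda>_. True" "\<lambda>_. True"]) (auto intro: assms)

lemma tsubst_Var[simp]: "tsubst Var t = t"
proof (induction t rule: trm_ind)
  case (Fn f ts)
  then have "map (tsubst Var) ts = ts" by (intro map_idI) auto
  then show ?case by simp
qed simp

lemma map_tsubst_Var[simp]: "map (tsubst Var) ts = ts"
  by (intro map_idI) simp

lemma fsubst_Var[simp]: "fsubst Var A = A"
  by (rule form.induct[of "\<lambda>_. True" "\<lambda>_. True" "\<lambda>A. fsubst Var A = A"]) auto

lemma cnf_finite: "\<forall>C\<in>cnf p A. finite C"
proof -
  have "\<forall>p. \<forall>C\<in>cnf p A. finite C"
    by (rule form.induct[of "\<lambda>_. True" "\<lambda>_. True" "\<lambda>A. \<forall>p. \<forall>C\<in>cnf p A. finite C"])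
       (auto simp: cdisj_def)
  then show ?thesis by blast
qed

lemma zero_D0[simp]: "zeroG \<in> D0 m"
  by (simp add: D0_def zeroG_def)

lemma sucG_D0: "g \<in> D0 m \<Longrightarrow> sucG m g \<in> D0 m"
  by (cases g) (auto simp: D0_def sucG.simps)

lemma predG_D0: "g \<in> D0 m \<Longrightarrow> predG m g \<in> D0 m"
proof (cases g)
  case (fields a z r)
  assume g: "g \<in> D0 m"
  show ?thesis
  proof (cases "g = zeroG")
    case True then show ?thesis by simp
  next
    case False
    show ?thesis
    proof (cases "a = 0")
      case True
      with g fields have z: "0 \<le> z" "int m dvd z" "r = 0" by (auto simp: D0_def)
      with False True fields have "z \<noteq> 0" by (auto simp: zeroG_def)
      with z obtain q where q: "z = int m * q" by (auto elim: dvdE)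
      with \<open>z \<noteq> 0\<close> z have "q \<ge> 1"
        by (metis int_one_le_iff_zero_less mult_eq_0_iff mult_nonneg_nonpos2 nle_le not_le of_nat_0_le_iff zero_less_mult_iff)
      have "int m * 1 \<le> int m * q" using \<open>q \<ge> 1\<close> by (intro mult_left_mono) auto
      then have "z - int m = int m * (q - 1)" "z - int m \<ge> 0" using q by (auto simp: algebra_simps)
      then show ?thesis using fields False True z by (auto simp: D0_def predG.simps)
    next
      case False2: False
      with g fields show ?thesis by (auto simp: D0_def predG.simps zeroG_def)
    qed
  qed
qed

lemma plusG_D0: "0 < m \<Longrightarrow> g \<in> D0 m \<Longrightarrow> h \<in> D0 m \<Longrightarrow> plusG m g h \<in> D0 m"
  by (cases g; cases h) (auto simp: D0_def plusG.simps)

lemma iF_D0: "0 < m \<Longrightarrow> set xs \<subseteq> D0 m \<Longrightarrow> iF m f xs \<in> D0 m"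
proof (cases f)
  case (FSk \<phi>)
  then show ?thesis by (auto intro: someI2_ex)
qed (auto split: list.split intro: sucG_D0 predG_D0 plusG_D0)

lemma ev_D0: "0 < m \<Longrightarrow> range v \<subseteq> D0 m \<Longrightarrow> ev m t v \<in> D0 m"
  by (induction t rule: trm_ind) (auto intro!: iF_D0)


fun atr :: "nat \<Rightarrow> (nat \<Rightarrow> G) \<Rightarrow> atm \<Rightarrow> bool" where
  "atr m v (AEq t u) = (ev m t v = ev m u v)"
| "atr m v (APred p ts) = False"

fun ltr :: "nat \<Rightarrow> (nat \<Rightarrow> G) \<Rightarrow> lit \<Rightarrow> bool" where
  "ltr m v (Pos a) = atr m v a"
| "ltr m v (NegL a) = (\<not> atr m v a)"

definition gtrue :: "nat \<Rightarrow> clause \<Rightarrow> bool" where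
  "gtrue m C \<longleftrightarrow> (\<forall>u. range u \<subseteq> D0 m \<longrightarrow> (\<exists>l\<in>C. ltr m u l))"

definition Fm :: "nat \<Rightarrow> fsym \<Rightarrow> nat list \<Rightarrow> nat" where
  "Fm m f xs = to_nat (iF m f (map from_nat xs))"
definition Dn :: "nat \<Rightarrow> nat set" where "Dn m = to_nat ` D0 m"
definition Pn :: "nat \<Rightarrow> nat list \<Rightarrow> bool" where "Pn p xs = False"

lemma eval_enc: "range v \<subseteq> Dn m \<Longrightarrow> eval (Fm m) v t = to_nat (ev m t (from_nat \<circ> v))"
proof (induction t rule: trm_ind)
  case (Var x)
  have "v x \<in> Dn m" using Var.prems by blast
  then obtain g :: G where "v x = to_nat g" unfolding Dn_def by blast
  then show ?case by simp
next
  case (Fn f ts)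
  then have e: "map (from_nat \<circ> eval (Fm m) v) ts = map (\<lambda>t. ev m t (from_nat \<circ> v)) ts"
    by (auto simp: comp_def)
  have "eval (Fm m) v (Fn f ts) = Fm m f (map (eval (Fm m) v) ts)" by simp
  also have "\<dots> = to_nat (iF m f (map (from_nat \<circ> eval (Fm m) v) ts))"
    by (simp only: Fm_def map_map)
  also have "\<dots> = to_nat (ev m (Fn f ts) (from_nat \<circ> v))" by (simp only: e ev.simps)
  finally show ?case .
qed

lemma lit_enc: assumes v: "range v \<subseteq> Dn m" shows "lit_true (Fm m) Pn v l = ltr m (from_nat \<circ> v) l"
proof (cases l)
  case (Pos a) then show ?thesis by (cases a) (auto simp: eval_enc[OF v] Pn_def inj_eq[OF inj_to_nat])
next
  case (NegL a) then show ?thesis by (cases a) (auto simp: eval_enc[OF v] Pn_def inj_eq[OF inj_to_nat])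
qed

lemma clause_true_iff: "clause_true (Dn m) (Fm m) Pn C = gtrue m C"
proof
  assume H: "clause_true (Dn m) (Fm m) Pn C"
  show "gtrue m C" unfolding gtrue_def
  proof (intro allI impI)
    fix u :: "nat \<Rightarrow> G" assume u: "range u \<subseteq> D0 m"
    have "range (to_nat \<circ> u) \<subseteq> Dn m" using u by (auto simp: Dn_def)
    with H obtain l where "l \<in> C" "lit_true (Fm m) Pn (to_nat \<circ> u) l"
      unfolding clause_true_def by blast
    moreover have "from_nat \<circ> (to_nat \<circ> u) = u" by (auto simp: comp_def)
    ultimately show "\<exists>l\<in>C. ltr m u l" using lit_enc[OF \<open>range (to_nat \<circ> u) \<subseteq> Dn m\<close>] by metis
  qed
next
  assume H: "gtrue m C"
  show "clause_true (Dn m) (Fm m) Pn C" unfolding clause_true_def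
  proof (intro allI impI)
    fix v :: "nat \<Rightarrow> nat" assume v: "range v \<subseteq> Dn m"
    have "range (from_nat \<circ> v) \<subseteq> D0 m" using v by (auto simp: Dn_def)
    with H obtain l where "l \<in> C" "ltr m (from_nat \<circ> v) l" unfolding gtrue_def by blast
    then show "\<exists>l\<in>C. lit_true (Fm m) Pn v l" using lit_enc[OF v] by metis
  qed
qed

lemma struct_ok: "0 < m \<Longrightarrow> is_struct (Dn m) (Fm m)"
proof -
  assume m: "0 < m"
  have "Fm m f xs \<in> Dn m" if "set xs \<subseteq> Dn m" for f xs
  proof -
    have "set (map from_nat xs) \<subseteq> D0 m" using that by (auto simp: Dn_def)
    then show ?thesis using iF_D0[OF m] by (auto simp: Fm_def Dn_def)
  qed
  then show ?thesis by (auto simp: is_struct_def Dn_def)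
qed

lemma model_iff: "0 < m \<Longrightarrow> is_model (Dn m) (Fm m) Pn X \<longleftrightarrow> (\<forall>C\<in>X. gtrue m C)"
  by (simp add: is_model_def struct_ok clause_true_iff)

lemma gtrue_empty: "\<not> gtrue m {}"
  unfolding gtrue_def by (rule notI, erule allE[of _ "\<lambda>_. zeroG"]) auto

lemma ev_tsubst: "ev m (tsubst e t) v = ev m t (\<lambda>z. ev m (e z) v)"
proof (induction t rule: trm_ind)
  case (Fn f ts)
  then have "map (\<lambda>t. ev m (tsubst e t) v) ts = map (\<lambda>t. ev m t (\<lambda>z. ev m (e z) v)) ts"
    by auto
  then show ?case by (simp add: comp_def del: map_eq_conv)
qed simp

lemma ltr_lsubst: "ltr m v (lsubst e l) = ltr m (\<lambda>z. ev m (e z) v) l"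
proof (cases l)
  case (Pos a) then show ?thesis by (cases a) (auto simp: ev_tsubst)
next
  case (NegL a) then show ?thesis by (cases a) (auto simp: ev_tsubst)
qed

lemma ev_agree: "(\<forall>z\<in>fv_trm t. v z = v' z) \<Longrightarrow> ev m t v = ev m t v'"
proof (induction t rule: trm_ind)
  case (Fn f ts)
  then have "map (\<lambda>t. ev m t v) ts = map (\<lambda>t. ev m t v') ts" by auto
  then show ?case by (simp only: ev.simps)
qed simp

lemma atr_agree: assumes "\<forall>z\<in>fv_form (atm_form a). v z = v' z" shows "atr m v a = atr m v' a"
proof (cases a)
  case (AEq t u)
  have "ev m t v = ev m t v'" by (rule ev_agree) (use assms AEq in auto)
  moreover have "ev m u v = ev m u v'" by (rule ev_agree) (use assms AEq in auto)
  ultimately show ?thesis using AEq by simp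
qed simp

lemma ltr_agree: assumes "\<forall>z\<in>vars_lit l. v z = v' z" shows "ltr m v l = ltr m v' l"
proof (cases l)
  case (Pos a) then show ?thesis using assms atr_agree[of a v v' m]
    by (simp add: vars_lit_def)
next
  case (NegL a) then show ?thesis using assms atr_agree[of a v v' m]
    by (simp add: vars_lit_def)
qed

lemma ltr_compl[simp]: "ltr m v (compl l) = (\<not> ltr m v l)"
  by (cases l) auto

lemma tr_lit_form[simp]: "tr m (lit_form l) b v = ltr m v l"
proof (cases l)
  case (Pos a) then show ?thesis by (cases a) auto
next
  case (NegL a) then show ?thesis by (cases a) auto
qed

lemma ltr_linst:
  assumes "x \<noteq> y" "vars_lit l \<subseteq> {x, y}"
  shows "ltr m v (linst l x y t (Fn c [])) = ltr m ((\<lambda>_. iF m c [])(x := ev m t v)) l"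
  unfolding linst_def ltr_lsubst
  by (rule ltr_agree) (use assms in auto)


subsection \<open>Eventually linear behaviour of terms\<close>

definition stdG :: "nat \<Rightarrow> nat \<Rightarrow> G" where "stdG m n = (0, int m * int n, 0)"

fun lin :: "nat \<Rightarrow> int \<Rightarrow> G \<Rightarrow> G \<Rightarrow> G" where
  "lin m k (ca, cz, cr) (a, z, r) = (k * a + ca, k * z + cz, (k * r + cr) mod int m)"

fun plusC :: "G \<Rightarrow> G \<Rightarrow> G" where
  "plusC (a,z,r) (a',z',r') = (a+a', z+z', r+r')"

definition islinf :: "nat \<Rightarrow> (G \<Rightarrow> G) \<Rightarrow> int \<Rightarrow> G \<Rightarrow> nat \<Rightarrow> bool" where
  "islinf m f k c N \<longleftrightarrow> 0 \<le> k \<and> 0 \<le> fst c \<and>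
     (\<forall>d\<in>D0 m. 1 \<le> fst d \<longrightarrow> f d = lin m k c d) \<and>
     (\<forall>n\<ge>N. f (stdG m n) = lin m k c (stdG m n))"

lemma stdG_D0[simp]: "stdG m n \<in> D0 m"
  by (auto simp: stdG_def D0_def)

lemma stdG_0: "stdG m 0 = zeroG"
  by (simp add: stdG_def zeroG_def)

lemma sucG_stdG: "sucG m (stdG m n) = stdG m (Suc n)"
  by (simp add: stdG_def sucG.simps algebra_simps)

lemma D0_fst: "g \<in> D0 m \<Longrightarrow> 0 \<le> fst g"
  by (auto simp: D0_def)

lemma D0_norm: "0 < m \<Longrightarrow> (a, z, r) \<in> D0 m \<Longrightarrow> r mod int m = r"
  by (auto simp: D0_def)

lemma lin_suc: "sucG m (lin m k c d) = lin m k (sucG m c) d"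
  by (cases c; cases d) (simp add: sucG.simps)

lemma lin_plus: "plusG m (lin m k1 c1 d) (lin m k2 c2 d) = lin m (k1 + k2) (plusC c1 c2) d"
  by (cases c1; cases c2; cases d) (simp add: plusG.simps mod_add_eq algebra_simps)

lemma L_id: "0 < m \<Longrightarrow> islinf m (\<lambda>d. d) 1 zeroG 0"
  unfolding islinf_def
proof (intro conjI ballI allI impI)
  fix d assume "0 < m" "d \<in> D0 m"
  then show "d = lin m 1 zeroG d" by (cases d) (auto simp: zeroG_def D0_norm)
next
  fix n show "stdG m n = lin m 1 zeroG (stdG m n)" by (simp add: stdG_def zeroG_def)
qed (auto simp: zeroG_def)

lemma L_const: "0 < m \<Longrightarrow> c \<in> D0 m \<Longrightarrow> islinf m (\<lambda>d. c) 0 c 0"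
  unfolding islinf_def
proof (intro conjI ballI allI impI)
  fix d assume "0 < m" "c \<in> D0 m"
  then show "c = lin m 0 c d" by (cases c; cases d) (auto simp: D0_norm)
  show "c = lin m 0 c (stdG m n)" for n using \<open>0 < m\<close> \<open>c \<in> D0 m\<close>
    by (cases c; cases "stdG m n") (auto simp: D0_norm)
qed (auto simp: D0_fst)

lemma L_suc: "islinf m f k c N \<Longrightarrow> islinf m (\<lambda>d. sucG m (f d)) k (sucG m c) N"
  unfolding islinf_def by (cases c) (auto simp: lin_suc sucG.simps)

lemma L_plus: "islinf m f1 k1 c1 N1 \<Longrightarrow> islinf m f2 k2 c2 N2 \<Longrightarrow>
   islinf m (\<lambda>d. plusG m (f1 d) (f2 d)) (k1 + k2) (plusC c1 c2) (max N1 N2)"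
  unfolding islinf_def by (cases c1; cases c2) (auto simp: lin_plus)

lemma L_pred:
  assumes m: "0 < m" and L: "islinf m f k c N"
  shows "\<exists>k' c' N'. islinf m (\<lambda>d. predG m (f d)) k' c' N'"
proof (cases c)
  case (fields ca cz cr)
  from L have k0: "0 \<le> k" and ca0: "0 \<le> ca" using fields by (auto simp: islinf_def)
  show ?thesis
  proof (cases "k = 0")
    case True
    define c' where "c' = predG m (ca, cz, cr mod int m)"
    have fd: "f d = (ca, cz, cr mod int m)" if "d \<in> D0 m" "1 \<le> fst d" for d
      using L that True fields by (cases d) (auto simp: islinf_def)
    have fs: "f (stdG m n) = (ca, cz, cr mod int m)" if "n \<ge> N" for n
      using L that True fields by (auto simp: islinf_def stdG_def)
    have c'n: "lin m 0 c' d = c'" for d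
      by (cases d) (auto simp: c'_def predG.simps zeroG_def)
    have "0 \<le> fst c'" using ca0 by (auto simp: c'_def predG.simps zeroG_def)
    then have "islinf m (\<lambda>d. predG m (f d)) 0 c' N"
      unfolding islinf_def using fd fs c'n by (auto simp: c'_def)
    then show ?thesis by blast
  next
    case False
    with k0 have k1: "1 \<le> k" by simp
    define c' where "c' = (ca, cz - int m, cr)"
    define N' where "N' = max N (nat \<bar>cz\<bar> + 1)"
    have ns: "predG m (f d) = lin m k c' d" if d: "d \<in> D0 m" "1 \<le> fst d" for d
    proof (cases d)
      case (fields a z r)
      have "1 * 1 \<le> k * a" using k1 d fields by (intro mult_mono) auto
      then have "k * a + ca \<noteq> 0" using ca0 by linarith
      moreover have "f d = (k * a + ca, k * z + cz, (k * r + cr) mod int m)"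
        using L d fields \<open>c = (ca, cz, cr)\<close> by (auto simp: islinf_def)
      ultimately show ?thesis using fields
        by (simp add: predG.simps zeroG_def c'_def algebra_simps)
    qed
    have st: "predG m (f (stdG m n)) = lin m k c' (stdG m n)" if n: "n \<ge> N'" for n
    proof -
      have "1 * int n \<le> int m * int n" using m by (intro mult_right_mono) auto
      then have "int n \<le> int m * int n" by simp
      also have "\<dots> = 1 * (int m * int n)" by simp
      also have "\<dots> \<le> k * (int m * int n)" using k1 by (intro mult_right_mono) auto
      finally have "int n \<le> k * (int m * int n)" .
      moreover have "nat \<bar>cz\<bar> < n" using n by (simp add: N'_def)
      then have "int n > \<bar>cz\<bar>" by (simp add: nat_less_iff)
      ultimately have pos: "k * (int m * int n) + cz \<noteq> 0" by linarith
      have "f (stdG m n) = (k * 0 + ca, k * (int m * int n) + cz, (k * 0 + cr) mod int m)"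
        using L n \<open>c = (ca, cz, cr)\<close> by (auto simp: islinf_def stdG_def N'_def)
      then show ?thesis using pos
        by (simp add: predG.simps zeroG_def c'_def stdG_def algebra_simps)
    qed
    have "islinf m (\<lambda>d. predG m (f d)) k c' N'"
      unfolding islinf_def using ns st k0 ca0 by (auto simp: c'_def)
    then show ?thesis by blast
  qed
qed

lemma iF_shape:
  "(f = FS \<and> length xs = 1) \<or> (f = FP \<and> length xs = 1) \<or> (f = FPlus \<and> length xs = 2) \<or>
   iF m f xs = iF m f (replicate (length xs) zeroG)"
  by (cases f) (auto split: list.split simp: numeral_2_eq_2)

lemma linear:
  assumes m: "0 < m" and v: "range v \<subseteq> D0 m"
  shows "\<exists>k c N. islinf m (\<lambda>d. ev m t (v(x:=d))) k c N"
proof (induction t rule: trm_ind)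
  case (Var y)
  show ?case
  proof (cases "y = x")
    case True then have "(\<lambda>d. ev m (Var y) (v(x:=d))) = (\<lambda>d. d)" by auto
    then show ?thesis using L_id[OF m] by metis
  next
    case False then have "(\<lambda>d. ev m (Var y) (v(x:=d))) = (\<lambda>d. v y)" by auto
    moreover have "v y \<in> D0 m" using v by auto
    ultimately show ?thesis using L_const[OF m] by metis
  qed
next
  case (Fn f ts)
  have sh: "(f = FS \<and> length ts = 1) \<or> (f = FP \<and> length ts = 1) \<or> (f = FPlus \<and> length ts = 2) \<or>
   (\<forall>d. ev m (Fn f ts) (v(x:=d)) = iF m f (replicate (length ts) zeroG))"
    using iF_shape[of f "map (\<lambda>t. ev m t (v(x:=_))) ts"] by auto
  then consider (S) "f = FS" "length ts = 1" | (P) "f = FP" "length ts = 1"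
    | (Pl) "f = FPlus" "length ts = 2"
    | (O) "\<forall>d. ev m (Fn f ts) (v(x:=d)) = iF m f (replicate (length ts) zeroG)" by blast
  then show ?case
  proof cases
    case S
    then obtain t1 where ts: "ts = [t1]" by (auto simp: length_Suc_conv)
    have "t1 \<in> set ts" using ts by simp
    from Fn.IH[OF this] obtain k c N where L1: "islinf m (\<lambda>d. ev m t1 (v(x:=d))) k c N" by blast
    have e: "(\<lambda>d. ev m (Fn f ts) (v(x:=d))) = (\<lambda>d. sucG m (ev m t1 (v(x:=d))))"
      using S ts by simp
    show ?thesis unfolding e using L_suc[OF L1] by blast
  next
    case P
    then obtain t1 where ts: "ts = [t1]" by (auto simp: length_Suc_conv)
    have "t1 \<in> set ts" using ts by simp
    from Fn.IH[OF this] obtain k c N where L1: "islinf m (\<lambda>d. ev m t1 (v(x:=d))) k c N" by blast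
    have e: "(\<lambda>d. ev m (Fn f ts) (v(x:=d))) = (\<lambda>d. predG m (ev m t1 (v(x:=d))))"
      using P ts by simp
    show ?thesis unfolding e by (rule L_pred[OF m L1])
  next
    case Pl
    then obtain t1 t2 where ts: "ts = [t1, t2]" by (auto simp: length_Suc_conv numeral_2_eq_2)
    have "t1 \<in> set ts" using ts by simp
    from Fn.IH[OF this] obtain k1 c1 N1 where 1: "islinf m (\<lambda>d. ev m t1 (v(x:=d))) k1 c1 N1" by blast
    have "t2 \<in> set ts" using ts by simp
    from Fn.IH[OF this] obtain k2 c2 N2 where 2: "islinf m (\<lambda>d. ev m t2 (v(x:=d))) k2 c2 N2" by blast
    have e: "(\<lambda>d. ev m (Fn f ts) (v(x:=d))) = (\<lambda>d. plusG m (ev m t1 (v(x:=d))) (ev m t2 (v(x:=d))))"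
      using Pl ts by simp
    show ?thesis unfolding e using L_plus[OF 1 2] by blast
  next
    case O
    have "iF m f (replicate (length ts) zeroG) \<in> D0 m" using m by (intro iF_D0) auto
    have e: "(\<lambda>d. ev m (Fn f ts) (v(x:=d))) = (\<lambda>d. iF m f (replicate (length ts) zeroG))"
      using O by (intro ext) blast
    show ?thesis unfolding e using L_const[OF m \<open>iF m f (replicate (length ts) zeroG) \<in> D0 m\<close>] by blast
  qed
qed


subsection \<open>Boundary points for literal-definable sets\<close>

lemma mod_cancel_left: "(x + y) mod (M::int) = (x + y') mod M \<Longrightarrow> y mod M = y' mod M"
proof -
  assume "(x + y) mod M = (x + y') mod M"
  then have "((x + y) - x) mod M = ((x + y') - x) mod M"
    by (rule mod_diff_cong) simp
  then show ?thesis by simp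
qed

lemma boundary:
  assumes m: "0 < m" and v: "range v \<subseteq> D0 m" and P0: "ltr m (v(x:=zeroG)) L"
    and aD: "a \<in> D0 m" and Pa: "\<not> ltr m (v(x:=a)) L"
  shows "\<exists>e\<in>D0 m. ltr m (v(x:=e)) L \<and> \<not> ltr m (v(x:=sucG m e)) L"
proof (rule ccontr)
  assume "\<not> ?thesis"
  then have step: "\<And>e. e \<in> D0 m \<Longrightarrow> ltr m (v(x:=e)) L \<Longrightarrow> ltr m (v(x:=sucG m e)) L" by blast
  have allstd: "ltr m (v(x:=stdG m n)) L" for n
  proof (induction n)
    case 0 then show ?case using P0 by (simp only: stdG_0)
  next
    case (Suc n)
    from step[OF stdG_D0 Suc] show ?case by (simp add: sucG_stdG fun_upd_def)
  qed
  obtain a1 az ar where a: "a = (a1, az, ar)" by (cases a)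
  have a1: "1 \<le> a1"
  proof (rule ccontr)
    assume "\<not> 1 \<le> a1"
    with aD a have h: "a1 = 0" "0 \<le> az" "int m dvd az" "ar = 0" by (auto simp: D0_def)
    then obtain q where q: "az = int m * q" by (auto elim: dvdE)
    with h m have "0 \<le> q" by (simp add: zero_le_mult_iff)
    then have "a = stdG m (nat q)" using a h q by (simp add: stdG_def)
    with allstd Pa show False by metis
  qed
  have aNS: "1 \<le> fst a" using a a1 by simp
  have ev_lin: "\<And>t k c N. islinf m (\<lambda>d. ev m t (v(x:=d))) k c N \<Longrightarrow> ev m t (v(x:=a)) = lin m k c a"
    using aD aNS by (auto simp: islinf_def)
  have ev_std: "\<And>t k c N n. islinf m (\<lambda>d. ev m t (v(x:=d))) k c N \<Longrightarrow> N \<le> n \<Longrightarrow>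
      ev m t (v(x:=stdG m n)) = lin m k c (stdG m n)"
    by (auto simp: islinf_def)
  show False
  proof (cases L)
    case (Pos at)
    show False
    proof (cases at)
      case (APred p ts) with Pos P0 show False by simp
    next
      case (AEq t1 t2)
      obtain k1 c1 N1 where L1: "islinf m (\<lambda>d. ev m t1 (v(x:=d))) k1 c1 N1" using linear[OF m v] by blast
      obtain k2 c2 N2 where L2: "islinf m (\<lambda>d. ev m t2 (v(x:=d))) k2 c2 N2" using linear[OF m v] by blast
      obtain ca1 cz1 cr1 where c1: "c1 = (ca1, cz1, cr1)" by (cases c1)
      obtain ca2 cz2 cr2 where c2: "c2 = (ca2, cz2, cr2)" by (cases c2)
      define n0 where "n0 = max N1 N2"
      have eqs: "lin m k1 c1 (stdG m n) = lin m k2 c2 (stdG m n)" if "n0 \<le> n" for n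
        using allstd[of n] ev_std[OF L1, of n] ev_std[OF L2, of n] that Pos AEq
        by (simp add: n0_def)
      have q1: "lin m k1 c1 (stdG m n0) = lin m k2 c2 (stdG m n0)" by (rule eqs) simp
      have q2: "lin m k1 c1 (stdG m (Suc n0)) = lin m k2 c2 (stdG m (Suc n0))" by (rule eqs) simp
      have e1: "k1 * (int m * int n0) + cz1 = k2 * (int m * int n0) + cz2" and
        ea: "ca1 = ca2" and er: "cr1 mod int m = cr2 mod int m"
        using q1 by (simp_all only: stdG_def c1 c2 lin.simps prod.inject mult_zero_right add_0)
      have e2: "k1 * (int m * int (Suc n0)) + cz1 = k2 * (int m * int (Suc n0)) + cz2"
        using q2 by (simp only: stdG_def c1 c2 lin.simps prod.inject)
      have "k1 * (int m * int (Suc n0)) = k1 * (int m * int n0) + k1 * int m"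
           "k2 * (int m * int (Suc n0)) = k2 * (int m * int n0) + k2 * int m"
        by (simp_all add: algebra_simps)
      with e1 e2 have "k1 * int m = k2 * int m" by linarith
      then have k: "k1 = k2" using m by simp
      then have cz: "cz1 = cz2" using e1 by simp
      have "(k1 * ar + cr1) mod int m = (k2 * ar + cr2) mod int m"
        using k er by (intro mod_add_cong) auto
      then have "lin m k1 c1 a = lin m k2 c2 a" using k cz ea by (simp add: a c1 c2)
      then have "ltr m (v(x:=a)) L" using ev_lin[OF L1] ev_lin[OF L2] Pos AEq by simp
      with Pa show False by simp
    qed
  next
    case (NegL at)
    show False
    proof (cases at)
      case (APred p ts) with NegL Pa show False by simp
    next
      case (AEq t1 t2)
      obtain k1 c1 N1 where L1: "islinf m (\<lambda>d. ev m t1 (v(x:=d))) k1 c1 N1" using linear[OF m v] by blast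
      obtain k2 c2 N2 where L2: "islinf m (\<lambda>d. ev m t2 (v(x:=d))) k2 c2 N2" using linear[OF m v] by blast
      obtain ca1 cz1 cr1 where c1: "c1 = (ca1, cz1, cr1)" by (cases c1)
      obtain ca2 cz2 cr2 where c2: "c2 = (ca2, cz2, cr2)" by (cases c2)
      define n0 where "n0 = max N1 N2"
      have neq: "lin m k1 c1 (stdG m n0) \<noteq> lin m k2 c2 (stdG m n0)"
        using allstd[of n0] ev_std[OF L1, of n0] ev_std[OF L2, of n0] NegL AEq
        by (simp add: n0_def)
      have "lin m k1 c1 a = lin m k2 c2 a"
        using Pa ev_lin[OF L1] ev_lin[OF L2] NegL AEq by simp
      then have ha: "k1 * a1 + ca1 = k2 * a1 + ca2" and hz: "k1 * az + cz1 = k2 * az + cz2"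
        and hr: "(k1 * ar + cr1) mod int m = (k2 * ar + cr2) mod int m"
        by (simp_all add: a c1 c2)
      show False
      proof (cases "k1 = k2")
        case True
        then have "ca1 = ca2" "cz1 = cz2" using ha hz by simp_all
        moreover have "cr1 mod int m = cr2 mod int m"
          using mod_cancel_left[of "k2 * ar" cr1 "int m" cr2] hr True by metis
        ultimately have "lin m k1 c1 (stdG m n0) = lin m k2 c2 (stdG m n0)"
          using True by (simp add: c1 c2 stdG_def)
        with neq show False by simp
      next
        case False
        define e where "e = (a1, az - int m, ar)"
        have eD: "e \<in> D0 m" using aD a a1 by (auto simp: D0_def e_def)
        have eNS: "1 \<le> fst e" using a1 by (simp add: e_def)
        have se: "sucG m e = a" by (simp add: e_def a sucG.simps)
        have "lin m k1 c1 e \<noteq> lin m k2 c2 e"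
        proof
          assume "lin m k1 c1 e = lin m k2 c2 e"
          then have "k1 * (az - int m) + cz1 = k2 * (az - int m) + cz2" by (simp add: e_def c1 c2)
          moreover have "k1 * (az - int m) = k1 * az - k1 * int m"
            "k2 * (az - int m) = k2 * az - k2 * int m" by (simp_all add: right_diff_distrib)
          ultimately have "k1 * int m = k2 * int m" using hz by linarith
          with m False show False by simp
        qed
        moreover have "ev m t1 (v(x:=e)) = lin m k1 c1 e" "ev m t2 (v(x:=e)) = lin m k2 c2 e"
          using L1 L2 eD eNS by (auto simp: islinf_def)
        ultimately have "ltr m (v(x:=e)) L" using NegL AEq by simp
        from step[OF eD this] se Pa show False by simp
      qed
    qed
  qed
qed

subsection \<open>Soundness of the induction rule in the model\<close>

lemma ev_skterm[simp]: "ev m (skterm \<Phi>) u = iF m (FSk \<Phi>) []"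
  by (simp add: skterm_def)

lemma aind_sound:
  assumes m: "0 < m" and R: "(Dc, B) \<in> Literal_AIND" and T: "\<forall>C\<in>Dc. gtrue m C"
  shows "\<forall>C\<in>B. gtrue m C \<and> finite C"
proof -
  from R obtain l x y c C where xy: "x \<noteq> y" and vl: "vars_lit l \<subseteq> {x, y}" and fC: "finite C"
    and prem: "insert (compl (linst l x y (Fn c []) (Fn c []))) C \<in> Dc"
    and B: "B = {insert (compl (linst l x y zero (Fn c [])))
              (insert (linst l x y (aind_sigma l x y (Fn c [])) (Fn c [])) C),
           insert (compl (linst l x y zero (Fn c [])))
              (insert (compl (linst l x y (sc (aind_sigma l x y (Fn c []))) (Fn c []))) C)}"
    unfolding Literal_AIND_def by blast
  define aval where "aval = iF m c []"
  define Lp where "Lp d = ltr m ((\<lambda>_. aval)(x := d)) l" for d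
  define \<Phi> where "\<Phi> = FAll x (FImp (lit_form (linst l x y (Var x) (Fn c [])))
                                 (lit_form (linst l x y (sc (Var x)) (Fn c []))))"
  define W where "W = iF m (FSk \<Phi>) []"
  have sig: "aind_sigma l x y (Fn c []) = skterm \<Phi>" by (simp add: aind_sigma_def \<Phi>_def)
  have lin: "ltr m u (linst l x y t (Fn c [])) = Lp (ev m t u)" for u t
    using ltr_linst[OF xy vl] by (simp add: Lp_def aval_def)
  have tr\<Phi>: "tr m \<Phi> True (bvv \<Phi> e) \<longleftrightarrow> Lp e \<and> \<not> Lp (sucG m e)" for e
    by (simp add: \<Phi>_def bvv_def lin)
  have evW: "ev m (aind_sigma l x y (Fn c [])) u = W" for u by (simp only: sig ev_skterm W_def)
  have evsW: "ev m (sc (aind_sigma l x y (Fn c []))) u = sucG m W" for u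
    using evW[of u] by simp
  have ev0: "ev m zero u = zeroG" for u by simp
  have lin0: "ltr m u (linst l x y zero (Fn c [])) = Lp zeroG" for u by (simp only: lin ev0)
  have linW: "ltr m u (linst l x y (aind_sigma l x y (Fn c [])) (Fn c [])) = Lp W" for u
    by (simp only: lin evW)
  have linsW: "ltr m u (linst l x y (sc (aind_sigma l x y (Fn c []))) (Fn c [])) = Lp (sucG m W)" for u
    by (simp only: lin evsW)
  have lina: "ltr m u (linst l x y (Fn c []) (Fn c [])) = Lp aval" for u
    by (simp add: lin aval_def)
  have avalD: "aval \<in> D0 m" using iF_D0[OF m] by (simp add: aval_def)
  have Wp: "Lp W \<and> \<not> Lp (sucG m W)" if "Lp zeroG" "\<not> Lp aval"
  proof -
    have "\<exists>e\<in>D0 m. Lp e \<and> \<not> Lp (sucG m e)"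
      using boundary[OF m _ _ avalD, of "\<lambda>_. aval" x l] that avalD by (auto simp: Lp_def)
    then have ex: "\<exists>e\<in>D0 m. tr m \<Phi> True (bvv \<Phi> e)" using tr\<Phi> by simp
    then have "W = (SOME e. e \<in> D0 m \<and> tr m \<Phi> True (bvv \<Phi> e))" by (simp add: W_def)
    moreover have "(SOME e. e \<in> D0 m \<and> tr m \<Phi> True (bvv \<Phi> e)) \<in> D0 m \<and>
        tr m \<Phi> True (bvv \<Phi> (SOME e. e \<in> D0 m \<and> tr m \<Phi> True (bvv \<Phi> e)))"
    proof -
      have "\<exists>e. e \<in> D0 m \<and> tr m \<Phi> True (bvv \<Phi> e)" using ex by blast
      then show ?thesis by (rule someI_ex)
    qed
    ultimately show ?thesis using tr\<Phi> by simp
  qed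
  show ?thesis
  proof (intro ballI conjI)
    fix D assume DB: "D \<in> B"
    show "finite D" using DB B fC by auto
    show "gtrue m D" unfolding gtrue_def
    proof (intro allI impI)
      fix u :: "nat \<Rightarrow> G" assume u: "range u \<subseteq> D0 m"
      show "\<exists>l\<in>D. ltr m u l"
      proof (cases "Lp aval")
        case True
        from T prem u have "\<exists>l'\<in>insert (compl (linst l x y (Fn c []) (Fn c []))) C. ltr m u l'"
          unfolding gtrue_def by blast
        with True have "\<exists>l'\<in>C. ltr m u l'" by (simp add: lina)
        then show ?thesis using DB B by auto
      next
        case False
        show ?thesis
        proof (cases "Lp zeroG")
          case False2: False
          then have "ltr m u (compl (linst l x y zero (Fn c [])))" by (simp add: lin0)
          then show ?thesis using DB B by auto
        next
          case True
          from Wp[OF True False]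
          have "ltr m u (linst l x y (aind_sigma l x y (Fn c [])) (Fn c []))"
            "ltr m u (compl (linst l x y (sc (aind_sigma l x y (Fn c []))) (Fn c [])))"
            by (simp_all add: linW linsW)
          then show ?thesis using DB B by auto
        qed
      qed
    qed
  qed
qed

lemma closure:
  assumes m: "0 < m" and S: "is_sat_system S" "sound S"
    and ded: "deducible (S \<union> Literal_AIND) C0 Dc" and C0: "clause_set C0" "\<forall>C\<in>C0. gtrue m C"
  shows "clause_set Dc \<and> (\<forall>C\<in>Dc. gtrue m C)"
  using ded
proof induction
  case start then show ?case using C0 by simp
next
  case (step Dc B)
  from step.IH have cs: "clause_set Dc" and tD: "\<forall>C\<in>Dc. gtrue m C" by auto
  from step.hyps(2) consider "(Dc, B) \<in> S" | "(Dc, B) \<in> Literal_AIND" by blast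
  then show ?case
  proof cases
    case 1
    have fB: "clause_set B" using S(1) 1 unfolding is_sat_system_def by auto
    have "gtrue m C" if "C \<in> B" for C
    proof -
      have "deducible S Dc (Dc \<union> B)" using deducible.step[OF deducible.start 1] .
      then have "derivable S Dc C" using that unfolding derivable_def by blast
      then have "entails Dc C" using S(2) cs unfolding sound_def by blast
      moreover have "is_model (Dn m) (Fm m) Pn Dc" using model_iff[OF m] tD by simp
      ultimately have "clause_true (Dn m) (Fm m) Pn C" unfolding entails_def by blast
      then show ?thesis by (simp add: clause_true_iff)
    qed
    then show ?thesis using cs tD fB by (auto simp: clause_set_def)
  next
    case 2
    from aind_sound[OF m 2 tD] cs tD show ?thesis by (auto simp: clause_set_def)
  qed
qed

lemma not_refutes:
  assumes m: "0 < m" and S: "is_sat_system S" "sound S"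
    and C0: "clause_set C0" "\<forall>C\<in>C0. gtrue m C"
  shows "\<not> refutes (S \<union> Literal_AIND) C0"
  unfolding refutes_def derivable_def using closure[OF m S _ C0] gtrue_empty by blast

subsection \<open>The model satisfies T'\<close>

lemma gA1: "0 < m \<Longrightarrow> g \<in> D0 m \<Longrightarrow> zeroG \<noteq> sucG m g"
  by (cases g) (auto simp: D0_def zeroG_def sucG.simps)

lemma gA3: "0 < m \<Longrightarrow> g \<in> D0 m \<Longrightarrow> predG m (sucG m g) = g"
  by (cases g) (auto simp: D0_def zeroG_def sucG.simps predG.simps)

lemma gA4: "0 < m \<Longrightarrow> g \<in> D0 m \<Longrightarrow> plusG m g zeroG = g"
  by (cases g) (auto simp: D0_def zeroG_def plusG.simps)

lemma gA5: "plusG m g (sucG m h) = sucG m (plusG m g h)"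
  by (cases g; cases h) (auto simp: plusG.simps sucG.simps)

lemma gA6: "g \<in> D0 m \<Longrightarrow> g \<noteq> zeroG \<Longrightarrow> g = sucG m (predG m g)"
  by (cases g) (auto simp: zeroG_def sucG.simps predG.simps)

lemma gA7: "plusG m g h = plusG m h g"
  by (cases g; cases h) (auto simp: plusG.simps algebra_simps)

lemma gA8: "plusG m (plusG m g h) k = plusG m g (plusG m h k)"
  by (cases g; cases h; cases k) (auto simp: plusG.simps algebra_simps mod_add_left_eq mod_add_right_eq)

lemma gA9: assumes "0 < m" "g \<in> D0 m" "h \<in> D0 m" "k \<in> D0 m" "plusG m g h = plusG m g k"
  shows "h = k"
proof -
  obtain a z r where g: "g = (a, z, r)" by (cases g)
  obtain a1 z1 r1 where h: "h = (a1, z1, r1)" by (cases h)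
  obtain a2 z2 r2 where k: "k = (a2, z2, r2)" by (cases k)
  from assms(5) have "a1 = a2" "z1 = z2" "(r + r1) mod int m = (r + r2) mod int m"
    by (simp_all add: g h k plusG.simps)
  moreover from this(3) have "r1 mod int m = r2 mod int m" by (rule mod_cancel_left)
  moreover have "r1 mod int m = r1" "r2 mod int m = r2"
    using assms(1-4) h k by (auto simp: D0_norm)
  ultimately show ?thesis by (simp add: h k)
qed

lemma Tprime_true:
  assumes m: "0 < m" and A: "A \<in> Tprime" and C: "C \<in> cnf True (sk_ex A)"
  shows "gtrue m C"
proof -
  have cd: "cdisj {X} {Y} = {X \<union> Y}" for X Y by (auto simp: cdisj_def)
  have U: "\<And>u z. range u \<subseteq> D0 m \<Longrightarrow> u z \<in> D0 m" by auto
  from A C show ?thesis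
    unfolding Tprime_def sk_ex_def
    apply (auto simp: vx_def vy_def vz_def gtrue_def cd gA1[OF m] gA3[OF m] gA4[OF m] gA5
          U gA8 intro: gA7)
     apply (metis U gA6)
    apply (metis U gA9[OF m])
    done
qed


subsection \<open>The Skolemized negated goals\<close>

fun mulG :: "nat \<Rightarrow> nat \<Rightarrow> G \<Rightarrow> G" where
  "mulG m k (a, z, r) = (int k * a, int k * z, (int k * r) mod int m)"

fun shG :: "nat \<Rightarrow> nat \<Rightarrow> G \<Rightarrow> G" where
  "shG m n (a, z, r) = (a, z + int n * int m, r)"

lemma tsubst_mtimes[simp]: "tsubst e (mtimes k t) = mtimes k (tsubst e t)"
  by (induction k t rule: mtimes.induct) auto

lemma tsubst_spow[simp]: "tsubst e (spow n t) = spow n (tsubst e t)"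
  by (induction n) (simp_all add: spow_def)

lemma ev_mtimes: assumes m: "0 < m" and g: "ev m t v \<in> D0 m"
  shows "ev m (mtimes (Suc k) t) v = mulG m (Suc k) (ev m t v)"
proof (induction k)
  case 0
  obtain a z r where e: "ev m t v = (a, z, r)" by (cases "ev m t v")
  with g m have "r mod int m = r" by (simp add: D0_norm)
  with e show ?case by simp
next
  case (Suc k)
  obtain a z r where e: "ev m t v = (a, z, r)" by (cases "ev m t v")
  have "ev m (mtimes (Suc (Suc k)) t) v = plusG m (ev m t v) (ev m (mtimes (Suc k) t) v)" by simp
  also have "\<dots> = plusG m (a, z, r) (mulG m (Suc k) (a, z, r))" using Suc e by simp
  also have "\<dots> = mulG m (Suc (Suc k)) (a, z, r)"
    by (simp add: plusG.simps mod_add_right_eq algebra_simps)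
  finally show ?case using e by simp
qed

lemma ev_spow: "ev m (spow n t) v = shG m n (ev m t v)"
proof (induction n)
  case 0 then show ?case by (cases "ev m t v") (simp add: spow_def)
next
  case (Suc n)
  have "ev m (spow (Suc n) t) v = sucG m (ev m (spow n t) v)" by (simp add: spow_def)
  then show ?case using Suc by (cases "ev m t v") (simp add: sucG.simps algebra_simps)
qed

lemma X_sk_true:
  assumes m: "1 < m" and C: "C \<in> cnf True (sk_ex (FNeg (Cm m)))"
  shows "gtrue m C"
proof -
  have m0: "0 < m" using m by simp
  obtain k where k: "m = Suc k" using m0 by (cases m) auto
  define T1 where "T1 = skterm (Cm m)"
  define \<Phi>2 where "\<Phi>2 = FAll vy (FImp (FEq (mtimes m T1) (mtimes m (Var vy))) (FEq T1 (Var vy)))"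
  define T2 where "T2 = skterm \<Phi>2"
  have sk: "sk_ex (FNeg (Cm m)) = FNeg (FImp (FEq (mtimes m T1) (mtimes m T2)) (FEq T1 T2))"
    by (simp add: sk_ex_def Cm_def T1_def T2_def \<Phi>2_def vx_def vy_def)
  have Cs: "C = {Pos (AEq (mtimes m T1) (mtimes m T2))} \<or> C = {NegL (AEq T1 T2)}"
    using C by (auto simp: sk)
  define w1 where "w1 = iF m (FSk (Cm m)) []"
  define w2 where "w2 = iF m (FSk \<Phi>2) []"
  have evT1: "ev m T1 u = w1" for u by (simp only: T1_def ev_skterm w1_def)
  have evT2: "ev m T2 u = w2" for u by (simp only: T2_def ev_skterm w2_def)
  have mt: "ev m (mtimes m t) u = mulG m m (ev m t u)" if "ev m t u \<in> D0 m" for t u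
    using ev_mtimes[OF m0 that, of k] k by simp
  have trC: "tr m (Cm m) True (bvv (Cm m) e) \<longleftrightarrow> (\<exists>d\<in>D0 m. mulG m m e = mulG m m d \<and> e \<noteq> d)"
    if "e \<in> D0 m" for e
  proof -
    have "tr m (Cm m) True (bvv (Cm m) e) \<longleftrightarrow>
       (\<exists>d\<in>D0 m. ev m (mtimes m (Var 0)) ((\<lambda>_. zeroG)(0 := e, 1 := d)) =
                  ev m (mtimes m (Var 1)) ((\<lambda>_. zeroG)(0 := e, 1 := d)) \<and> e \<noteq> d)"
      by (simp add: Cm_def bvv_def vx_def vy_def)
    also have "\<dots> \<longleftrightarrow> (\<exists>d\<in>D0 m. mulG m m e = mulG m m d \<and> e \<noteq> d)"
    proof (intro bex_cong refl)
      fix d assume "d \<in> D0 m"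
      then show "(ev m (mtimes m (Var 0)) ((\<lambda>_. zeroG)(0 := e, 1 := d)) =
                  ev m (mtimes m (Var 1)) ((\<lambda>_. zeroG)(0 := e, 1 := d)) \<and> e \<noteq> d) =
                 (mulG m m e = mulG m m d \<and> e \<noteq> d)"
        using that by (simp add: mt)
    qed
    finally show ?thesis .
  qed
  have e0: "(1, 0, 0) \<in> D0 m" "(1, 0, 1) \<in> D0 m" using m by (auto simp: D0_def)
  have "mulG m m (1, 0, 0) = mulG m m (1, 0, 1)" by simp
  then have "\<exists>d\<in>D0 m. mulG m m (1, 0, 0) = mulG m m d \<and> (1, 0, 0) \<noteq> d"
    using e0(2) by (intro bexI[of _ "(1, 0, 1)"]) auto
  then have ex1: "\<exists>e. e \<in> D0 m \<and> tr m (Cm m) True (bvv (Cm m) e)"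
    using trC[OF e0(1)] e0(1) by blast
  have w1: "w1 = (SOME e. e \<in> D0 m \<and> tr m (Cm m) True (bvv (Cm m) e))"
    unfolding w1_def iF.simps by (rule if_P) (use ex1 in blast)
  have "w1 \<in> D0 m \<and> tr m (Cm m) True (bvv (Cm m) w1)"
    unfolding w1 by (rule someI_ex[OF ex1])
  then have w1D: "w1 \<in> D0 m" and w1p: "\<exists>d\<in>D0 m. mulG m m w1 = mulG m m d \<and> w1 \<noteq> d"
    using trC[of w1] by blast+
  have tr2: "tr m \<Phi>2 True (bvv \<Phi>2 e) \<longleftrightarrow> mulG m m w1 = mulG m m e \<and> w1 \<noteq> e"
    if "e \<in> D0 m" for e
    using that w1D by (simp add: \<Phi>2_def bvv_def vy_def mt evT1)
  have ex2: "\<exists>e. e \<in> D0 m \<and> tr m \<Phi>2 True (bvv \<Phi>2 e)" using w1p tr2 by blast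
  have w2: "w2 = (SOME e. e \<in> D0 m \<and> tr m \<Phi>2 True (bvv \<Phi>2 e))"
    unfolding w2_def iF.simps by (rule if_P) (use ex2 in blast)
  have "w2 \<in> D0 m \<and> tr m \<Phi>2 True (bvv \<Phi>2 w2)"
    unfolding w2 by (rule someI_ex[OF ex2])
  then have w2D: "w2 \<in> D0 m" and w2p: "mulG m m w1 = mulG m m w2" "w1 \<noteq> w2"
    using tr2[of w2] by blast+
  show ?thesis
    using Cs unfolding gtrue_def
    by (auto simp: mt evT1 evT2 w1D w2D w2p)
qed

lemma Y_sk_true:
  assumes m: "0 < m" and C: "C \<in> cnf True (sk_ex (FNeg (Dmn m n)))"
  shows "gtrue m C"
proof -
  obtain k where k: "m = Suc k" using m by (cases m) auto
  define T1 where "T1 = skterm (Dmn m n)"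
  define \<Phi>2 where "\<Phi>2 = FAll vy (fneq (spow n (mtimes m T1)) (mtimes m (Var vy)))"
  define T2 where "T2 = skterm \<Phi>2"
  have sk: "sk_ex (FNeg (Dmn m n)) = FNeg (FNeg (FEq (spow n (mtimes m T1)) (mtimes m T2)))"
    by (simp add: sk_ex_def Dmn_def T1_def T2_def \<Phi>2_def vx_def vy_def)
  have Cs: "C = {Pos (AEq (spow n (mtimes m T1)) (mtimes m T2))}"
    using C by (simp add: sk)
  define w1 where "w1 = iF m (FSk (Dmn m n)) []"
  define w2 where "w2 = iF m (FSk \<Phi>2) []"
  have evT1: "ev m T1 u = w1" for u by (simp only: T1_def ev_skterm w1_def)
  have evT2: "ev m T2 u = w2" for u by (simp only: T2_def ev_skterm w2_def)
  have mt: "ev m (mtimes m t) u = mulG m m (ev m t u)" if "ev m t u \<in> D0 m" for t u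
    using ev_mtimes[OF m that, of k] k by simp
  have trC: "tr m (Dmn m n) True (bvv (Dmn m n) e) \<longleftrightarrow> (\<exists>d\<in>D0 m. shG m n (mulG m m e) = mulG m m d)"
    if "e \<in> D0 m" for e
  proof -
    have "tr m (Dmn m n) True (bvv (Dmn m n) e) \<longleftrightarrow>
       (\<exists>d\<in>D0 m. ev m (spow n (mtimes m (Var 0))) ((\<lambda>_. zeroG)(0 := e, 1 := d)) =
                  ev m (mtimes m (Var 1)) ((\<lambda>_. zeroG)(0 := e, 1 := d)))"
      by (simp add: Dmn_def bvv_def vx_def vy_def)
    also have "\<dots> \<longleftrightarrow> (\<exists>d\<in>D0 m. shG m n (mulG m m e) = mulG m m d)"
    proof (intro bex_cong refl)
      fix d assume "d \<in> D0 m"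
      then show "(ev m (spow n (mtimes m (Var 0))) ((\<lambda>_. zeroG)(0 := e, 1 := d)) =
                  ev m (mtimes m (Var 1)) ((\<lambda>_. zeroG)(0 := e, 1 := d))) =
                 (shG m n (mulG m m e) = mulG m m d)"
        using that by (simp add: mt ev_spow)
    qed
    finally show ?thesis .
  qed
  have e0: "(1, 0, 0) \<in> D0 m" "(1, int n, 0) \<in> D0 m" using m by (auto simp: D0_def)
  have "shG m n (mulG m m (1, 0, 0)) = mulG m m (1, int n, 0)" by simp
  then have "\<exists>d\<in>D0 m. shG m n (mulG m m (1, 0, 0)) = mulG m m d" using e0(2) by blast
  then have ex1: "\<exists>e. e \<in> D0 m \<and> tr m (Dmn m n) True (bvv (Dmn m n) e)"
    using trC[OF e0(1)] e0(1) by blast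
  have w1: "w1 = (SOME e. e \<in> D0 m \<and> tr m (Dmn m n) True (bvv (Dmn m n) e))"
    unfolding w1_def iF.simps by (rule if_P) (use ex1 in blast)
  have "w1 \<in> D0 m \<and> tr m (Dmn m n) True (bvv (Dmn m n) w1)"
    unfolding w1 by (rule someI_ex[OF ex1])
  then have w1D: "w1 \<in> D0 m" and w1p: "\<exists>d\<in>D0 m. shG m n (mulG m m w1) = mulG m m d"
    using trC[of w1] by blast+
  have tr2: "tr m \<Phi>2 True (bvv \<Phi>2 e) \<longleftrightarrow> shG m n (mulG m m w1) = mulG m m e"
    if "e \<in> D0 m" for e
    using that w1D by (simp add: \<Phi>2_def bvv_def vy_def mt evT1 ev_spow)
  have ex2: "\<exists>e. e \<in> D0 m \<and> tr m \<Phi>2 True (bvv \<Phi>2 e)" using w1p tr2 by blast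
  have w2: "w2 = (SOME e. e \<in> D0 m \<and> tr m \<Phi>2 True (bvv \<Phi>2 e))"
    unfolding w2_def iF.simps by (rule if_P) (use ex2 in blast)
  have "w2 \<in> D0 m \<and> tr m \<Phi>2 True (bvv \<Phi>2 w2)"
    unfolding w2 by (rule someI_ex[OF ex2])
  then have w2D: "w2 \<in> D0 m" and w2p: "shG m n (mulG m m w1) = mulG m m w2"
    using tr2[of w2] by blast+
  show ?thesis
    using Cs unfolding gtrue_def
    by (auto simp: mt evT1 evT2 w1D w2D w2p ev_spow)
qed

theorem theorem6:
  fixes S :: sat_system and m n :: nat
  assumes "is_sat_system S" and "sound S" and "refut_complete S"
    and "0 < n" and "n < m"
  shows "\<not> refutes (S \<union> Literal_AIND) (Xcl m) \<and> \<not> refutes (S \<union> Literal_AIND) (Ycl m n)"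
proof -
  have m0: "0 < m" and m1: "1 < m" using assms by auto
  have csX: "clause_set (Xcl m)" unfolding clause_set_def Xcl_def CNF_def using cnf_finite by blast
  have csY: "clause_set (Ycl m n)" unfolding clause_set_def Ycl_def CNF_def using cnf_finite by blast
  have tX: "\<forall>C\<in>Xcl m. gtrue m C" unfolding Xcl_def CNF_def
    using Tprime_true[OF m0] X_sk_true[OF m1] by blast
  have tY: "\<forall>C\<in>Ycl m n. gtrue m C" unfolding Ycl_def CNF_def
    using Tprime_true[OF m0] Y_sk_true[OF m0] by blast
  show ?thesis
    using not_refutes[OF m0 assms(1,2) csX tX] not_refutes[OF m0 assms(1,2) csY tY] by blast
qed

end
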